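(* Let $\Phi:[a,b]\to\mathbb{R}$ be continuous and nowhere zero, let $x_0\in(a,b)$, and let $\mathcal S_n=\{\mathcal Y_0(x_0,x),\dots,\mathcal Y_n(x_0,x)\}$ and $\widetilde{\mathcal S}_n=\{\widetilde{\mathcal Y}_0(x_0,x),\dots,\widetilde{\mathcal Y}_n(x_0,x)\}$ (as functions of $x$) be of class $C^n(a,b)$. Then each of the sets $\mathcal S_n$ and $\widetilde{\mathcal S}_n$ is linearly independent (as functions on $(a,b)$).
   Context: For $x_0,x\in[a,b]$ the $\Phi$-power functions are defined recursively by $X^{(0)}(x_0,x)\equiv 1$, $\widetilde X^{(0)}(x_0,x)\equiv 1$ and, for $n\ge 1$, $$X^{(n)}(x_0,x)=n\int_{x_0}^x X^{(n-1)}(x_0,\xi)\,\big(\Phi(\xi)\big)^{(-1)^n}\,d\xi,\qquad \widetilde X^{(n)}(x_0,x)=n\int_{x_0}^x \widetilde X^{(n-1)}(x_0,\xi)\,\Big(\frac{1}{\Phi(\xi)}\Big)^{(-1)^n}\,d\xi.$$ For $n\ge0$, $\mathcal Y_n=\widetilde X^{(n)}$ if $n$ is odd and $\mathcal Y_n=X^{(n)}$ if $n$ is even; $\widetilde{\mathcal Y}_n=X^{(n)}$ if $n$ is odd and $\widetilde{\mathcal Y}_n=\widetilde X^{(n)}$ if $n$ is even. In this part of the paper $\Phi$ is assumed real-valued. *)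

theory Defs
  imports "HOL-Analysis.Analysis"
begin

definition oint :: "real \<Rightarrow> real \<Rightarrow> (real \<Rightarrow> real) \<Rightarrow> real" where
  "oint x0 x f = (if x0 \<le> x then integral {x0..x} f else - integral {x..x0} f)"

text \<open>(Phi xi) ^ ((-1)^n): Phi xi for n even, 1 / Phi xi for n odd.\<close>
definition altpow :: "real \<Rightarrow> nat \<Rightarrow> real" where
  "altpow y n = (if even n then y else 1 / y)"

fun Xpow :: "(real \<Rightarrow> real) \<Rightarrow> nat \<Rightarrow> real \<Rightarrow> real \<Rightarrow> real" where
  "Xpow \<Phi> 0 x0 x = 1"
| "Xpow \<Phi> (Suc n) x0 x =
     real (Suc n) * oint x0 x (\<lambda>\<xi>. Xpow \<Phi> n x0 \<xi> * altpow (\<Phi> \<xi>) (Suc n))"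

fun Xtpow :: "(real \<Rightarrow> real) \<Rightarrow> nat \<Rightarrow> real \<Rightarrow> real \<Rightarrow> real" where
  "Xtpow \<Phi> 0 x0 x = 1"
| "Xtpow \<Phi> (Suc n) x0 x =
     real (Suc n) * oint x0 x (\<lambda>\<xi>. Xtpow \<Phi> n x0 \<xi> * altpow (1 / \<Phi> \<xi>) (Suc n))"

definition Ypow :: "(real \<Rightarrow> real) \<Rightarrow> nat \<Rightarrow> real \<Rightarrow> real \<Rightarrow> real" where
  "Ypow \<Phi> n = (if odd n then Xtpow \<Phi> n else Xpow \<Phi> n)"

definition Ytpow :: "(real \<Rightarrow> real) \<Rightarrow> nat \<Rightarrow> real \<Rightarrow> real \<Rightarrow> real" where
  "Ytpow \<Phi> n = (if odd n then Xpow \<Phi> n else Xtpow \<Phi> n)"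

definition C_n_on :: "nat \<Rightarrow> real set \<Rightarrow> (real \<Rightarrow> real) \<Rightarrow> bool" where
  "C_n_on n S f \<longleftrightarrow>
     (\<forall>k<n. \<forall>x\<in>S. ((deriv ^^ k) f) differentiable (at x)) \<and>
     (\<forall>k\<le>n. continuous_on S ((deriv ^^ k) f))"

definition lin_indep_on :: "real set \<Rightarrow> nat \<Rightarrow> (nat \<Rightarrow> real \<Rightarrow> real) \<Rightarrow> bool" where
  "lin_indep_on S n g \<longleftrightarrow>
     (\<forall>c :: nat \<Rightarrow> real. (\<forall>x\<in>S. (\<Sum>k\<le>n. c k * g k x) = 0) \<longrightarrow> (\<forall>k\<le>n. c k = 0))"

end

theory Submission
  imports Defs
begin

lemma oint_eq:
  assumes g: "continuous_on {a..b} g" and x0: "x0 \<in> {a..b}" and x: "x \<in> {a..b}"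
  shows "oint x0 x g = integral {a..x} g - integral {a..x0} g"
proof (cases "x0 \<le> x")
  case True
  have "integral {a..x0} g + integral {x0..x} g = integral {a..x} g"
    using Henstock_Kurzweil_Integration.integral_combine[where a=a and c=x0 and b=x and f=g] True x0 x
      integrable_continuous_interval[OF continuous_on_subset[OF g, of "{a..x}"]] by auto
  then show ?thesis using True by (simp add: oint_def)
next
  case False
  have "integral {a..x} g + integral {x..x0} g = integral {a..x0} g"
    using Henstock_Kurzweil_Integration.integral_combine[where a=a and c=x and b=x0 and f=g] False x0 x
      integrable_continuous_interval[OF continuous_on_subset[OF g, of "{a..x0}"]] by auto
  then show ?thesis using False by (simp add: oint_def)
qed

lemma oint_cont:
  assumes g: "continuous_on {a..b} g" and x0: "x0 \<in> {a..b}"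
  shows "continuous_on {a..b} (\<lambda>x. oint x0 x g)"
proof -
  have "continuous_on {a..b} (\<lambda>x. integral {a..x} g - integral {a..x0} g)"
    by (intro continuous_intros indefinite_integral_continuous_1 integrable_continuous_interval g)
  then show ?thesis
    by (rule continuous_on_eq) (use oint_eq[OF g x0] in auto)
qed

lemma oint_deriv:
  assumes g: "continuous_on {a..b} g" and x0: "x0 \<in> {a..b}" and x: "x \<in> {a<..<b}"
  shows "((\<lambda>x. oint x0 x g) has_real_derivative g x) (at x)"
proof -
  have xi: "x \<in> {a..b}" using x by auto
  have "((\<lambda>x. integral {a..x} g - integral {a..x0} g) has_real_derivative g x - 0) (at x within {a..b})"
    by (intro derivative_intros integral_has_real_derivative g xi)
  then have "((\<lambda>x. integral {a..x} g - integral {a..x0} g) has_real_derivative g x) (at x)"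
    using at_within_interior[of x "{a..b}"] x by simp
  then show ?thesis
    by (rule has_field_derivative_transform_within_open[where S="{a<..<b}"])
       (use x oint_eq[OF g x0] in auto)
qed

lemma altpow_cont:
  assumes "continuous_on {a..b} f" "\<forall>x\<in>{a..b}. f x \<noteq> 0"
  shows "continuous_on {a..b} (\<lambda>x. altpow (f x) k)"
  using assms by (cases "even k") (auto simp: altpow_def intro!: continuous_intros)

context
  fixes \<Phi> :: "real \<Rightarrow> real" and a b x0 :: real
  assumes cont: "continuous_on {a..b} \<Phi>" and nz: "\<forall>x\<in>{a..b}. \<Phi> x \<noteq> 0"
    and x0: "x0 \<in> {a<..<b}"
begin

lemma cont_inv: "continuous_on {a..b} (\<lambda>x. 1 / \<Phi> x)"
  using cont nz by (auto intro!: continuous_intros)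

lemma nz_inv: "\<forall>x\<in>{a..b}. 1 / \<Phi> x \<noteq> 0"
  using nz by auto

lemma x0i: "x0 \<in> {a..b}" using x0 by auto

lemma Xpow_cont: "continuous_on {a..b} (\<lambda>x. Xpow \<Phi> n x0 x)"
proof (induction n)
  case 0 then show ?case by simp
next
  case (Suc n)
  show ?case
    by (simp only: Xpow.simps, intro continuous_intros oint_cont x0i Suc altpow_cont cont nz)
qed

lemma Xtpow_cont: "continuous_on {a..b} (\<lambda>x. Xtpow \<Phi> n x0 x)"
proof (induction n)
  case 0 then show ?case by simp
next
  case (Suc n)
  show ?case
    by (simp only: Xtpow.simps, intro continuous_intros oint_cont x0i Suc altpow_cont cont_inv nz_inv)
qed

lemma Xpow_deriv:
  assumes x: "x \<in> {a<..<b}"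
  shows "((\<lambda>x. Xpow \<Phi> (Suc n) x0 x) has_real_derivative
           real (Suc n) * (Xpow \<Phi> n x0 x * altpow (\<Phi> x) (Suc n))) (at x)"
  unfolding Xpow.simps
  by (intro DERIV_cmult oint_deriv[OF _ x0i x] continuous_intros Xpow_cont altpow_cont cont nz)

lemma Xtpow_deriv:
  assumes x: "x \<in> {a<..<b}"
  shows "((\<lambda>x. Xtpow \<Phi> (Suc n) x0 x) has_real_derivative
           real (Suc n) * (Xtpow \<Phi> n x0 x * altpow (1 / \<Phi> x) (Suc n))) (at x)"
  unfolding Xtpow.simps
  by (intro DERIV_cmult oint_deriv[OF _ x0i x] continuous_intros Xtpow_cont altpow_cont cont_inv nz_inv)

lemma Ypow_deriv:
  assumes x: "x \<in> {a<..<b}"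
  shows "((\<lambda>x. Ypow \<Phi> (Suc k) x0 x) has_real_derivative
           real (Suc k) * \<Phi> x * Ytpow \<Phi> k x0 x) (at x)"
proof -
  have "\<Phi> x \<noteq> 0" using nz x by auto
  then show ?thesis
    using Xpow_deriv[OF x, of k] Xtpow_deriv[OF x, of k]
    by (cases "even k") (auto simp: Ypow_def Ytpow_def altpow_def mult_ac)
qed

lemma Ytpow_deriv:
  assumes x: "x \<in> {a<..<b}"
  shows "((\<lambda>x. Ytpow \<Phi> (Suc k) x0 x) has_real_derivative
           real (Suc k) * (1 / \<Phi> x) * Ypow \<Phi> k x0 x) (at x)"
proof -
  have "\<Phi> x \<noteq> 0" using nz x by auto
  then show ?thesis
    using Xpow_deriv[OF x, of k] Xtpow_deriv[OF x, of k]
    by (cases "even k") (auto simp: Ypow_def Ytpow_def altpow_def mult_ac)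
qed

lemma Ypow_x0: "Ypow \<Phi> (Suc k) x0 x0 = 0" "Ytpow \<Phi> (Suc k) x0 x0 = 0"
  by (auto simp: Ypow_def Ytpow_def oint_def)

lemma Ypow_0: "Ypow \<Phi> 0 x0 x = 1" "Ytpow \<Phi> 0 x0 x = 1"
  by (auto simp: Ypow_def Ytpow_def)

end

lemma lin_step:
  fixes Y Z :: "nat \<Rightarrow> real \<Rightarrow> real" and S :: "real set"
  assumes S: "open S" and x0: "x0 \<in> S"
    and Y0: "\<And>x. Y 0 x = 1" and Yx0: "\<And>k. Y (Suc k) x0 = 0"
    and D: "\<And>x k. x \<in> S \<Longrightarrow> ((Y (Suc k)) has_real_derivative (real (Suc k) * p x * Z k x)) (at x)"
    and pnz: "\<And>x. x \<in> S \<Longrightarrow> p x \<noteq> 0"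
    and IH: "\<forall>d. (\<forall>x\<in>S. (\<Sum>k\<le>n. d k * Z k x) = 0) \<longrightarrow> (\<forall>k\<le>n. d k = 0)"
    and H: "\<forall>x\<in>S. (\<Sum>k\<le>Suc n. c k * Y k x) = 0"
  shows "\<forall>k\<le>Suc n. c k = 0"
proof -
  have split: "(\<Sum>k\<le>Suc n. c k * Y k x) = c 0 + (\<Sum>j\<le>n. c (Suc j) * Y (Suc j) x)" for x
    by (simp only: sum.atMost_Suc_shift Y0)
  have "(\<Sum>k\<le>Suc n. c k * Y k x0) = c 0" by (simp only: split Yx0) simp
  then have c0: "c 0 = 0" using H x0 by simp
  have zero: "\<forall>x\<in>S. (\<Sum>j\<le>n. c (Suc j) * Y (Suc j) x) = 0"
    using H split c0 by simp
  have "\<forall>x\<in>S. (\<Sum>j\<le>n. (c (Suc j) * real (Suc j)) * Z j x) = 0"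
  proof
    fix x assume x: "x \<in> S"
    have d1: "((\<lambda>x. \<Sum>j\<le>n. c (Suc j) * Y (Suc j) x) has_real_derivative
        (\<Sum>j\<le>n. c (Suc j) * (real (Suc j) * p x * Z j x))) (at x)"
      by (intro DERIV_sum DERIV_cmult D x)
    have "((\<lambda>x. 0) has_real_derivative
        (\<Sum>j\<le>n. c (Suc j) * (real (Suc j) * p x * Z j x))) (at x)"
      by (rule has_field_derivative_transform_within_open[OF d1 S x]) (use zero in auto)
    then have "(\<Sum>j\<le>n. c (Suc j) * (real (Suc j) * p x * Z j x)) = 0"
      using DERIV_const DERIV_unique by blast
    then have "p x * (\<Sum>j\<le>n. (c (Suc j) * real (Suc j)) * Z j x) = 0"
      by (simp add: sum_distrib_left mult_ac)
    then show "(\<Sum>j\<le>n. (c (Suc j) * real (Suc j)) * Z j x) = 0"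
      using pnz[OF x] by simp
  qed
  then have "\<forall>j\<le>n. c (Suc j) * real (Suc j) = 0" using IH[rule_format, of "\<lambda>j. c (Suc j) * real (Suc j)"] by simp
  then have "\<forall>j\<le>n. c (Suc j) = 0" by simp
  then show ?thesis using c0
    by (metis Suc_le_mono not0_implies_Suc)
qed

lemma both:
  assumes cont: "continuous_on {a..b} \<Phi>" and nz: "\<forall>x\<in>{a..b}. \<Phi> x \<noteq> 0"
    and x0: "x0 \<in> {a<..<b}"
  shows "lin_indep_on {a<..<b} n (\<lambda>k x. Ypow \<Phi> k x0 x)
       \<and> lin_indep_on {a<..<b} n (\<lambda>k x. Ytpow \<Phi> k x0 x)"
proof (induction n)
  case 0
  show ?case using x0 by (auto simp: lin_indep_on_def Ypow_0[OF cont nz x0])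
next
  case (Suc n)
  have nzS: "\<And>x. x \<in> {a<..<b} \<Longrightarrow> \<Phi> x \<noteq> 0" "\<And>x. x \<in> {a<..<b} \<Longrightarrow> 1 / \<Phi> x \<noteq> 0"
    using nz by auto
  have A: "\<forall>k\<le>Suc n. c k = 0" if H: "\<forall>x\<in>{a<..<b}. (\<Sum>k\<le>Suc n. c k * Ypow \<Phi> k x0 x) = 0" for c
    apply (rule lin_step[where Y="\<lambda>k x. Ypow \<Phi> k x0 x" and Z="\<lambda>k x. Ytpow \<Phi> k x0 x" and p=\<Phi>
            and S="{a<..<b}"])
    using Suc H x0 nzS Ypow_0[OF cont nz x0] Ypow_x0[OF cont nz x0]
            Ypow_deriv[OF cont nz x0] apply (auto simp: lin_indep_on_def)
    done
  have B: "\<forall>k\<le>Suc n. c k = 0" if H: "\<forall>x\<in>{a<..<b}. (\<Sum>k\<le>Suc n. c k * Ytpow \<Phi> k x0 x) = 0" for c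
    apply (rule lin_step[where Y="\<lambda>k x. Ytpow \<Phi> k x0 x" and Z="\<lambda>k x. Ypow \<Phi> k x0 x" and p="\<lambda>x. 1 / \<Phi> x"
            and S="{a<..<b}"])
    using Suc H x0 nzS Ypow_0[OF cont nz x0] Ypow_x0[OF cont nz x0]
            Ytpow_deriv[OF cont nz x0] apply (auto simp: lin_indep_on_def)
    done
  show ?case unfolding lin_indep_on_def using A B by blast
qed

theorem proposition2:
  fixes \<Phi> :: "real \<Rightarrow> real" and a b x0 :: real and n :: nat
  assumes "continuous_on {a..b} \<Phi>"
    and "\<forall>x\<in>{a..b}. \<Phi> x \<noteq> 0"
    and "x0 \<in> {a<..<b}"
    and "\<forall>k\<le>n. C_n_on n {a<..<b} (\<lambda>x. Ypow \<Phi> k x0 x)"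
    and "\<forall>k\<le>n. C_n_on n {a<..<b} (\<lambda>x. Ytpow \<Phi> k x0 x)"
  shows "lin_indep_on {a<..<b} n (\<lambda>k x. Ypow \<Phi> k x0 x)
       \<and> lin_indep_on {a<..<b} n (\<lambda>k x. Ytpow \<Phi> k x0 x)"
  using both[OF assms(1-3)] .

end
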